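(* Let $Q$ be a generic spherical quadrilateral. Then the net of $Q$ does not contain an arc with its two ends at two opposite corners of $Q$.
   Context: A spherical quadrilateral $Q$ is a surface homeomorphic to a closed disk with a Riemannian metric of constant curvature $1$, with four conic singularities (corners) $a_0,\dots,a_3$ on the boundary, labeled counterclockwise, such that the boundary arcs $[a_j,a_{j+1}]$ (the sides) are geodesic; opposite corners are $a_0,a_2$ and $a_1,a_3$. Its developing map $\Phi:Q\to\mathbb S$ to the unit sphere is the analytic continuation of a local isometry. $Q$ is generic if the images under $\Phi$ of its four sides lie on four distinct great circles, no three of which have a common point; these circles define a partition $\mathcal P$ of $\mathbb S$. The net $\Gamma$ of $Q$ is the cell decomposition of $Q$ whose vertices, edges and faces are the connected components of the preimages under $\Phi$ of the vertices, edges and faces of $\mathcal P$; corners of $Q$ are vertices of $\Gamma$. For a circle $C$ of $\mathcal P$, a $C$-arc is a simple path in $\Gamma\cap\Phi^{-1}(C)$ with ends at vertices of $\Gamma$, which may contain corners of $Q$ only at its ends; an arc is a $C$-arc for some circle $C$ of $\mathcal P$. *)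

theory Defs
  imports "HOL-Analysis.Analysis"
begin

text \<open>Q is identified (via a homeomorphism,
  orientation preserving) with the closed unit disk cball 0 1 in the complex plane;
  the metric of Q is the pullback of the metric of the unit sphere S in real^3
  under the developing map Phi.\<close>

definition closed_disk :: "complex set" where
  "closed_disk = cball 0 1"

definition unit_sphere3 :: "(real^3) set" where
  "unit_sphere3 = sphere 0 1"

text \<open>Point at spherical distance r from p in direction theta (w.r.t. the frame u, v).\<close>
definition cone_pt :: "real^3 \<Rightarrow> real^3 \<Rightarrow> real^3 \<Rightarrow> real \<Rightarrow> real \<Rightarrow> real^3" where
  "cone_pt p u v r \<theta> = cos r *\<^sub>R p + sin r *\<^sub>R (cos \<theta> *\<^sub>R u + sin \<theta> *\<^sub>R v)"

definition orthonormal3 :: "real^3 \<Rightarrow> real^3 \<Rightarrow> real^3 \<Rightarrow> bool" where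
  "orthonormal3 p u v \<longleftrightarrow> norm p = 1 \<and> norm u = 1 \<and> norm v = 1 \<and>
     p \<bullet> u = 0 \<and> p \<bullet> v = 0 \<and> u \<bullet> v = 0"

definition upper_half_disk :: "real \<Rightarrow> complex set" where
  "upper_half_disk e = {w. cmod w < e \<and> 0 \<le> Im w}"

text \<open>Local model at a point z of the boundary circle: a neighbourhood of z in Q is
  isometric to a spherical sector of angle beta and radius e bounded by two geodesic
  rays lying in the boundary of Q; the developing map is the exponential map of that sector.\<close>
definition boundary_cone_model :: "(complex \<Rightarrow> real^3) \<Rightarrow> complex \<Rightarrow> real \<Rightarrow> bool" where
  "boundary_cone_model \<Phi> z \<beta> \<longleftrightarrow>
     (\<exists>U g h e p u v. 0 < e \<and> e < pi \<and>
        openin (top_of_set closed_disk) U \<and> z \<in> U \<and>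
        homeomorphism (upper_half_disk e) U g h \<and> g 0 = z \<and>
        g ` {w \<in> upper_half_disk e. Im w = 0} = U \<inter> sphere 0 1 \<and>
        orthonormal3 p u v \<and>
        (\<forall>w \<in> upper_half_disk e. \<Phi> (g w) = cone_pt p u v (cmod w) (\<beta> / pi * Arg w)))"

text \<open>Interior points: the developing map is a local homeomorphism (local isometry).\<close>
definition interior_regular :: "(complex \<Rightarrow> real^3) \<Rightarrow> complex \<Rightarrow> bool" where
  "interior_regular \<Phi> z \<longleftrightarrow> (\<exists>e>0. ball z e \<subseteq> closed_disk \<and> inj_on \<Phi> (ball z e))"

definition corner :: "(nat \<Rightarrow> real) \<Rightarrow> nat \<Rightarrow> complex" where
  "corner t j = cis (t j)"

definition corners :: "(nat \<Rightarrow> real) \<Rightarrow> complex set" where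
  "corners t = corner t ` {..<4}"

definition tt :: "(nat \<Rightarrow> real) \<Rightarrow> nat \<Rightarrow> real" where
  "tt t j = (if j = 4 then t 0 + 2 * pi else t j)"

text \<open>Side [a_j, a_(j+1)] (counterclockwise boundary arc), j < 4, indices mod 4.\<close>
definition side :: "(nat \<Rightarrow> real) \<Rightarrow> nat \<Rightarrow> complex set" where
  "side t j = cis ` {t j .. tt t (Suc j)}"

definition spherical_quadrilateral :: "(complex \<Rightarrow> real^3) \<Rightarrow> (nat \<Rightarrow> real) \<Rightarrow> bool" where
  "spherical_quadrilateral \<Phi> t \<longleftrightarrow>
     t 0 < t 1 \<and> t 1 < t 2 \<and> t 2 < t 3 \<and> t 3 < t 0 + 2 * pi \<and>
     continuous_on closed_disk \<Phi> \<and> \<Phi> ` closed_disk \<subseteq> unit_sphere3 \<and>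
     (\<forall>z. cmod z < 1 \<longrightarrow> interior_regular \<Phi> z) \<and>
     (\<forall>z. cmod z = 1 \<and> z \<notin> corners t \<longrightarrow> boundary_cone_model \<Phi> z pi) \<and>
     (\<forall>j<4. \<exists>\<beta>>0. boundary_cone_model \<Phi> (corner t j) \<beta>)"

definition great_circle :: "real^3 \<Rightarrow> (real^3) set" where
  "great_circle n = {x. norm x = 1 \<and> n \<bullet> x = 0}"

definition generic_circles :: "(complex \<Rightarrow> real^3) \<Rightarrow> (nat \<Rightarrow> real) \<Rightarrow> (nat \<Rightarrow> real^3) \<Rightarrow> bool" where
  "generic_circles \<Phi> t n \<longleftrightarrow>
     (\<forall>j<4. norm (n j) = 1 \<and> \<Phi> ` side t j \<subseteq> great_circle (n j)) \<and>
     (\<forall>i<4. \<forall>j<4. i \<noteq> j \<longrightarrow> great_circle (n i) \<noteq> great_circle (n j)) \<and>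
     (\<forall>i<4. \<forall>j<4. \<forall>k<4. i \<noteq> j \<and> j \<noteq> k \<and> i \<noteq> k \<longrightarrow>
        great_circle (n i) \<inter> great_circle (n j) \<inter> great_circle (n k) = {})"

text \<open>A C-arc of the net joining corners j and k: a simple path in the preimage of C,
  meeting corners only at its ends (the corners are vertices of the net).\<close>
definition net_arc_between :: "(complex \<Rightarrow> real^3) \<Rightarrow> (nat \<Rightarrow> real) \<Rightarrow> (real^3) set \<Rightarrow> nat \<Rightarrow> nat \<Rightarrow> bool" where
  "net_arc_between \<Phi> t C j k \<longleftrightarrow>
     (\<exists>\<gamma>. arc \<gamma> \<and> path_image \<gamma> \<subseteq> closed_disk \<inter> \<Phi> -` C \<and>
        pathstart \<gamma> = corner t j \<and> pathfinish \<gamma> = corner t k \<and>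
        (\<forall>s\<in>{0<..<1}. \<gamma> s \<notin> corners t))"

end

theory Submission
  imports Defs
begin

lemma corner_in_sides:
  assumes q: "spherical_quadrilateral \<Phi> t" and j: "j < 4"
  shows "corner t j \<in> side t j \<and> corner t j \<in> side t ((j + 3) mod 4)"
proof -
  have o: "t 0 < t 1" "t 1 < t 2" "t 2 < t 3" "t 3 < t 0 + 2 * pi"
    using q unfolding spherical_quadrilateral_def by auto
  have c0: "cis (t 0 + 2 * pi) = cis (t 0)"
    by (simp add: cis.ctr complex_eq_iff)
  have mem: "\<And>a b x. a \<le> x \<Longrightarrow> x \<le> b \<Longrightarrow> cis x \<in> cis ` {a..b}" by auto
  have "j = 0 \<or> j = 1 \<or> j = 2 \<or> j = 3" using j by auto
  then show ?thesis
  proof (elim disjE)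
    assume "j = 0"
    moreover have "cis (t 0) \<in> side t 3"
      unfolding side_def tt_def using mem[of "t 3" "t 0 + 2 * pi" "t 0 + 2 * pi"] o c0 by simp
    moreover have "cis (t 0) \<in> side t 0"
      unfolding side_def tt_def using mem[of "t 0" "t 1" "t 0"] o by simp
    ultimately show ?thesis by (simp add: corner_def)
  next
    assume "j = 1"
    moreover have "cis (t 1) \<in> side t 0"
      unfolding side_def tt_def using mem[of "t 0" "t 1" "t 1"] o by simp
    moreover have "cis (t 1) \<in> side t 1"
      unfolding side_def tt_def using mem[of "t 1" "t 2" "t 1"] o by (simp add: numeral_2_eq_2)
    ultimately show ?thesis by (simp add: corner_def)
  next
    assume "j = 2"
    moreover have "cis (t 2) \<in> side t 1"
      unfolding side_def tt_def using mem[of "t 1" "t 2" "t 2"] o by (simp add: numeral_2_eq_2)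
    moreover have "cis (t 2) \<in> side t 2"
      unfolding side_def tt_def using mem[of "t 2" "t 3" "t 2"] o by (simp add: numeral_3_eq_3 numeral_2_eq_2)
    ultimately show ?thesis by (simp add: corner_def)
  next
    assume "j = 3"
    moreover have "cis (t 3) \<in> side t 2"
      unfolding side_def tt_def using mem[of "t 2" "t 3" "t 3"] o by (simp add: numeral_3_eq_3 numeral_2_eq_2)
    moreover have "cis (t 3) \<in> side t 3"
      unfolding side_def tt_def using mem[of "t 3" "t 0 + 2 * pi" "t 3"] o by (simp add: numeral_3_eq_3 numeral_2_eq_2 eval_nat_numeral)
    ultimately show ?thesis by (simp add: corner_def)
  qed
qed

theorem lemma2p11:
  fixes \<Phi> :: "complex \<Rightarrow> real^3" and t :: "nat \<Rightarrow> real" and n :: "nat \<Rightarrow> real^3"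
  assumes "spherical_quadrilateral \<Phi> t"
    and "generic_circles \<Phi> t n"
  shows "\<not> (\<exists>j<4. \<exists>C \<in> great_circle ` n ` {..<4}. net_arc_between \<Phi> t C j ((j + 2) mod 4))"
proof
  assume "\<exists>j<4. \<exists>C \<in> great_circle ` n ` {..<4}. net_arc_between \<Phi> t C j ((j + 2) mod 4)"
  then obtain j i \<gamma> where j: "j < 4" and i: "i < 4" and
    g: "path_image \<gamma> \<subseteq> closed_disk \<inter> \<Phi> -` great_circle (n i)"
    "pathstart \<gamma> = corner t j" "pathfinish \<gamma> = corner t ((j + 2) mod 4)"
    unfolding net_arc_between_def by blast
  define G where "G = (\<lambda>m. great_circle (n m))"
  have side: "\<And>m. m < 4 \<Longrightarrow> \<Phi> ` side t m \<subseteq> G m"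
    using assms(2) unfolding generic_circles_def G_def by auto
  have tri: "\<And>a b c. a < 4 \<Longrightarrow> b < 4 \<Longrightarrow> c < 4 \<Longrightarrow> a \<noteq> b \<Longrightarrow> b \<noteq> c \<Longrightarrow> a \<noteq> c
      \<Longrightarrow> G a \<inter> G b \<inter> G c = {}"
    using assms(2) unfolding generic_circles_def G_def by blast
  have cor: "\<And>m. m < 4 \<Longrightarrow> \<Phi> (corner t m) \<in> G m \<and> \<Phi> (corner t m) \<in> G ((m + 3) mod 4)"
  proof -
    fix m :: nat assume m: "m < 4"
    have "(m + 3) mod 4 < 4" by simp
    then show "\<Phi> (corner t m) \<in> G m \<and> \<Phi> (corner t m) \<in> G ((m + 3) mod 4)"
      using corner_in_sides[OF assms(1) m] side[OF m] side[of "(m+3) mod 4"] by blast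
  qed
  have x: "\<Phi> (corner t j) \<in> G i" using g pathstart_in_path_image G_def by (metis IntD2 subsetD vimageE)
  have y: "\<Phi> (corner t ((j + 2) mod 4)) \<in> G i"
    using g pathfinish_in_path_image G_def by (metis IntD2 subsetD vimageE)
  have j4: "j = 0 \<or> j = 1 \<or> j = 2 \<or> j = 3" using j by auto
  have A: "i = j \<or> i = (j + 3) mod 4"
  proof (rule ccontr)
    assume h: "\<not> (i = j \<or> i = (j + 3) mod 4)"
    have "j \<noteq> (j + 3) mod 4" using j4 by auto
    then have "G i \<inter> G j \<inter> G ((j + 3) mod 4) = {}" using tri[OF i j, of "(j+3) mod 4"] h by auto
    then show False using x cor[OF j] by blast
  qed
  define k where "k = (j + 2) mod 4"
  have k: "k < 4" unfolding k_def by simp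
  have k4: "k = 0 \<or> k = 1 \<or> k = 2 \<or> k = 3" using k by auto
  have B: "i = k \<or> i = (k + 3) mod 4"
  proof (rule ccontr)
    assume h: "\<not> (i = k \<or> i = (k + 3) mod 4)"
    have "k \<noteq> (k + 3) mod 4" using k4 by auto
    then have "G i \<inter> G k \<inter> G ((k + 3) mod 4) = {}" using tri[OF i k, of "(k+3) mod 4"] h by auto
    then show False using y cor[OF k] k_def by blast
  qed
  show False using A B j4 unfolding k_def by auto
qed

end
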